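(* Let $M_i\subseteq B(H_i)$ and $N_i\subseteq B(K_i)$, $i=1,2$, be finite-dimensional von Neumann algebras on finite-dimensional Hilbert spaces with $M_1\cong M_2$ and $N_1\cong N_2$. Then there is a one-to-one correspondence between quantum multi-relations on the pair $(M_1,N_1)$ and quantum multi-relations on the pair $(M_2,N_2)$.
   Context: For finite-dimensional von Neumann algebras $M\subseteq B(H)$, $N\subseteq B(K)$, a quantum multi-relation on $(M,N)$ is a linear subspace $V\subseteq B(H\otimes K)$ such that (1) $V\subseteq B(H)\otimes N$; (2) $V$ is an $(M'\otimes1)$–$(M'\otimes1)$ bimodule, where $M'$ is the commutant of $M$ in $B(H)$; (3) $(1\otimes Z(N))V\subseteq V$, where $Z(N)=N\cap N'$ is the center of $N$. *)

theory Defs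
  imports "HOL-Analysis.Analysis"
begin

text \<open>Operators on the finite-dimensional Hilbert space complex^'a are represented
  by complex matrices complex^'a^'a (with matrix product **); the Hilbert space
  H tensor K is complex^('h \<times> 'k).\<close>

type_synonym 'a op = "complex^'a^'a"

definition cscale :: "complex \<Rightarrow> 'a::finite op \<Rightarrow> 'a op" where
  "cscale c A = (\<chi> i j. c * A $ i $ j)"

definition adj :: "'a::finite op \<Rightarrow> 'a op" where
  "adj A = (\<chi> i j. cnj (A $ j $ i))"

definition csubspace :: "'a::finite op set \<Rightarrow> bool" where
  "csubspace V \<longleftrightarrow> 0 \<in> V \<and> (\<forall>x\<in>V. \<forall>y\<in>V. x + y \<in> V) \<and> (\<forall>c. \<forall>x\<in>V. cscale c x \<in> V)"

definition cspan :: "'a::finite op set \<Rightarrow> 'a op set" where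
  "cspan S = \<Inter>{V. csubspace V \<and> S \<subseteq> V}"

definition vN_algebra :: "'a::finite op set \<Rightarrow> bool" where
  "vN_algebra M \<longleftrightarrow> csubspace M \<and> mat 1 \<in> M \<and>
     (\<forall>x\<in>M. \<forall>y\<in>M. x ** y \<in> M) \<and> (\<forall>x\<in>M. adj x \<in> M)"

definition commutant :: "'a::finite op set \<Rightarrow> 'a op set" where
  "commutant M = {x. \<forall>a\<in>M. x ** a = a ** x}"

definition center :: "'a::finite op set \<Rightarrow> 'a op set" where
  "center M = M \<inter> commutant M"

definition star_iso :: "('a::finite op \<Rightarrow> 'b::finite op) \<Rightarrow> 'a op set \<Rightarrow> 'b op set \<Rightarrow> bool" where
  "star_iso \<phi> M N \<longleftrightarrow> bij_betw \<phi> M N \<and>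
     (\<forall>x\<in>M. \<forall>y\<in>M. \<phi> (x + y) = \<phi> x + \<phi> y) \<and>
     (\<forall>c. \<forall>x\<in>M. \<phi> (cscale c x) = cscale c (\<phi> x)) \<and>
     (\<forall>x\<in>M. \<forall>y\<in>M. \<phi> (x ** y) = \<phi> x ** \<phi> y) \<and>
     (\<forall>x\<in>M. \<phi> (adj x) = adj (\<phi> x))"

definition vN_isomorphic :: "'a::finite op set \<Rightarrow> 'b::finite op set \<Rightarrow> bool" where
  "vN_isomorphic M N \<longleftrightarrow> (\<exists>\<phi>. star_iso \<phi> M N)"

definition tensor_op :: "'h::finite op \<Rightarrow> 'k::finite op \<Rightarrow> ('h \<times> 'k) op" where
  "tensor_op a b = (\<chi> p q. a $ fst p $ fst q * b $ snd p $ snd q)"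

text \<open>B(H) \<otimes> N as the (algebraic = spatial in finite dimensions) tensor product.\<close>
definition BH_tensor :: "'k::finite op set \<Rightarrow> ('h::finite \<times> 'k) op set" where
  "BH_tensor N = cspan {tensor_op a b | a b. b \<in> N}"

definition quantum_multi_relation ::
  "'h::finite op set \<Rightarrow> 'k::finite op set \<Rightarrow> ('h \<times> 'k) op set \<Rightarrow> bool" where
  "quantum_multi_relation M N V \<longleftrightarrow>
     csubspace V \<and>
     V \<subseteq> BH_tensor N \<and>
     (\<forall>a\<in>commutant M. \<forall>b\<in>commutant M. \<forall>v\<in>V.
        tensor_op a (mat 1) ** v ** tensor_op b (mat 1) \<in> V) \<and>
     (\<forall>z\<in>center N. \<forall>v\<in>V. tensor_op (mat 1) z ** v \<in> V)"

end

theory Submission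
  imports Defs
begin


definition csc :: "complex \<Rightarrow> complex^'n^'m \<Rightarrow> complex^'n^'m" where
  "csc c A = (\<chi> i j. c * A $ i $ j)"

lemma cscale_csc: "cscale c A = csc c A"
  by (simp add: cscale_def csc_def)

definition adjr :: "complex^'n^'m \<Rightarrow> complex^'m^'n" where
  "adjr A = (\<chi> i j. cnj (A $ j $ i))"

lemma adj_adjr: "adj A = adjr A"
  by (simp add: adj_def adjr_def)

lemma adjr_adjr[simp]: "adjr (adjr A) = A"
  by (simp add: adjr_def vec_eq_iff)

lemma adjr_mult: "adjr ((A::complex^'n^'m) ** (B::complex^'k^'n)) = adjr B ** adjr A"
  by (simp add: adjr_def matrix_matrix_mult_def vec_eq_iff mult.commute)

definition tens :: "complex^'n^'m \<Rightarrow> complex^'l^'k \<Rightarrow> complex^('n\<times>'l)^('m\<times>'k)" where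
  "tens a b = (\<chi> p q. a $ fst p $ fst q * b $ snd p $ snd q)"

lemma tensor_op_tens: "tensor_op a b = tens a b"
  by (simp add: tensor_op_def tens_def)

lemma tens_mult: "tens (a::complex^'n^'m) (b::complex^'l^'k) ** tens (c::complex^'p^'n) (d::complex^'q^'l)
   = tens (a ** c) (b ** d)"
proof -
  have "(\<Sum>r\<in>UNIV. a $ fst x $ fst r * b $ snd x $ snd r * (c $ fst r $ fst y * d $ snd r $ snd y))
     = (\<Sum>i\<in>UNIV. a $ fst x $ i * c $ i $ fst y) * (\<Sum>j\<in>UNIV. b $ snd x $ j * d $ j $ snd y)"
    for x :: "'m \<times> 'k" and y :: "'p \<times> 'q"
    by (simp add: sum_product sum.cartesian_product UNIV_Times_UNIV[symmetric] case_prod_beta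
        del: UNIV_Times_UNIV) (simp add: ac_simps)
  then show ?thesis
    by (simp add: tens_def matrix_matrix_mult_def vec_eq_iff)
qed

lemma tens_one: "tens (mat 1 :: complex^'n^'n) (mat 1 :: complex^'k^'k) = mat 1"
  by (auto simp add: tens_def mat_def vec_eq_iff prod_eq_iff)

lemma tens_sum_left: "finite I \<Longrightarrow> tens (\<Sum>i\<in>I. f i) b = (\<Sum>i\<in>I. tens (f i) b)"
  by (simp add: tens_def vec_eq_iff sum_distrib_right)

lemma mult_sum_left: "(\<Sum>i\<in>I. f i) ** (Y::'a::comm_semiring_1^'n^'m) = (\<Sum>i\<in>I. f i ** Y)"
  apply (cases "finite I")
  apply (simp add: matrix_matrix_mult_def vec_eq_iff sum_distrib_right)
  apply (subst sum.swap) apply simp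
  apply (simp add: matrix_matrix_mult_def vec_eq_iff)
  done

lemma mult_sum_right: "(Y::'a::comm_semiring_1^'n^'m) ** (\<Sum>i\<in>I. f i) = (\<Sum>i\<in>I. Y ** f i)"
  apply (cases "finite I")
  apply (simp add: matrix_matrix_mult_def vec_eq_iff sum_distrib_left)
  apply (subst sum.swap) apply simp
  apply (simp add: matrix_matrix_mult_def vec_eq_iff)
  done

lemma csc_mult_left: "csc c A ** B = csc c (A ** B)"
  by (simp add: csc_def matrix_matrix_mult_def vec_eq_iff sum_distrib_left mult.assoc)

lemma csc_mult_right: "A ** csc c B = csc c (A ** B)"
  by (simp add: csc_def matrix_matrix_mult_def vec_eq_iff sum_distrib_left ac_simps)

lemma csc_diff: "csc c (A - B) = csc c A - csc c B"
  by (simp add: csc_def vec_eq_iff algebra_simps)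
lemma csc_add: "csc c (A + B) = csc c A + csc c B"
  by (simp add: csc_def vec_eq_iff algebra_simps)

lemma csubspace_cspan: "csubspace (cspan S)"
  unfolding csubspace_def cspan_def by auto

lemma cspan_superset: "S \<subseteq> cspan S"
  unfolding cspan_def by auto

lemma cspan_minimal: "csubspace W \<Longrightarrow> S \<subseteq> W \<Longrightarrow> cspan S \<subseteq> W"
  unfolding cspan_def by auto

lemma csubspace_sum: "csubspace W \<Longrightarrow> (\<And>i. i \<in> I \<Longrightarrow> f i \<in> W) \<Longrightarrow> sum f I \<in> W"
proof (cases "finite I")
  case True
  assume W: "csubspace W" and f: "\<And>i. i \<in> I \<Longrightarrow> f i \<in> W"
  from True f show ?thesis
    by (induction I rule: finite_induct) (use W in \<open>auto simp: csubspace_def\<close>)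
qed (simp add: csubspace_def)

lemma cspan_map:
  fixes f :: "'a::finite op \<Rightarrow> 'b::finite op"
  assumes add: "\<And>x y. f (x + y) = f x + f y" and sc: "\<And>c x. f (cscale c x) = cscale c (f x)"
    and W: "csubspace W" and S: "\<And>x. x \<in> S \<Longrightarrow> f x \<in> W" and x: "x \<in> cspan S"
  shows "f x \<in> W"
proof -
  have f0: "f 0 = 0" using add[of 0 0] by simp
  have "csubspace {x. f x \<in> W}"
    using W unfolding csubspace_def by (auto simp: f0 add sc)
  then have "cspan S \<subseteq> {x. f x \<in> W}" using S by (intro cspan_minimal) auto
  then show ?thesis using x by auto
qed



definition blk :: "'h \<Rightarrow> 'h \<Rightarrow> complex^('h::finite\<times>'k::finite)^('h\<times>'k) \<Rightarrow> complex^'k^'k" where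
  "blk i j X = (\<chi> k l. X $ (i,k) $ (j,l))"

definition Umat :: "'a \<Rightarrow> 'a \<Rightarrow> complex^'a^'a" where
  "Umat i j = (\<chi> p q. if p = i \<and> q = j then 1 else 0)"

lemma blk_ext: "X = Y \<longleftrightarrow> (\<forall>i j. blk i j X = blk i j Y)"
  by (auto simp: blk_def vec_eq_iff)

lemma blk_add: "blk i j (X + Y) = blk i j X + blk i j Y"
  by (simp add: blk_def vec_eq_iff)
lemma blk_cscale: "blk i j (cscale c X) = cscale c (blk i j X)"
  by (simp add: blk_def cscale_def vec_eq_iff)
lemma blk_zero: "blk i j 0 = 0"
  by (simp add: blk_def vec_eq_iff)
lemma blk_tensor: "blk i j (tensor_op a b) = cscale (a $ i $ j) b"
  by (simp add: blk_def cscale_def tensor_op_def vec_eq_iff)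
lemma blk_sum: "blk i j (sum f I) = (\<Sum>x\<in>I. blk i j (f x))"
  by (induction I rule: infinite_finite_induct) (auto simp: blk_zero blk_add)

lemma blk_decomp: "X = (\<Sum>ij\<in>UNIV. tensor_op (Umat (fst ij) (snd ij)) (blk (fst ij) (snd ij) X))"
proof -
  have "(\<Sum>ij\<in>UNIV. tensor_op (Umat (fst ij) (snd ij)) (blk (fst ij) (snd ij) X)) $ p $ q = X $ p $ q"
    for p q :: "'a \<times> 'b"
  proof -
    have "(\<Sum>ij\<in>UNIV. tensor_op (Umat (fst ij) (snd ij)) (blk (fst ij) (snd ij) X)) $ p $ q
       = (\<Sum>ij\<in>UNIV. tensor_op (Umat (fst ij) (snd ij)) (blk (fst ij) (snd ij) X) $ p $ q)"
      by (simp only: sum_component)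
    also have "\<dots> = (\<Sum>ij\<in>UNIV. if ij = (fst p, fst q) then X $ (fst ij, snd p) $ (snd ij, snd q) else 0)"
      by (rule sum.cong) (auto simp: tensor_op_def Umat_def blk_def)
    also have "\<dots> = X $ p $ q" by (simp add: sum.delta)
    finally show ?thesis .
  qed
  then show ?thesis by (simp only: vec_eq_iff) simp
qed

lemma vN_csub: "vN_algebra N \<Longrightarrow> csubspace N"
  by (simp add: vN_algebra_def)

lemma csub_sum_sc: "csubspace N \<Longrightarrow> (\<And>k. k \<in> I \<Longrightarrow> f k \<in> N) \<Longrightarrow> (\<Sum>k\<in>I. cscale (g k) (f k)) \<in> N"
  by (rule csubspace_sum) (auto simp: csubspace_def)

lemma BH_tensor_iff:
  fixes N :: "'k::finite op set"
  assumes N: "csubspace N"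
  shows "(BH_tensor N :: ('h::finite\<times>'k) op set) = {X. \<forall>i j. blk i j X \<in> N}"
proof
  have W: "csubspace {X::('h::finite\<times>'k) op. \<forall>i j. blk i j X \<in> N}"
  proof -
    have N0: "0 \<in> N" and Nadd: "\<And>x y. x \<in> N \<Longrightarrow> y \<in> N \<Longrightarrow> x + y \<in> N"
      and Nsc: "\<And>c x. x \<in> N \<Longrightarrow> cscale c x \<in> N" using N unfolding csubspace_def by auto
    show ?thesis unfolding csubspace_def
      by (intro conjI ballI allI CollectI) (simp_all add: blk_add blk_cscale blk_zero N0 Nadd Nsc)
  qed
  have G: "{tensor_op a b |a b. b \<in> N} \<subseteq> {X::('h::finite\<times>'k) op. \<forall>i j. blk i j X \<in> N}"
  proof
    fix X :: "('h\<times>'k) op" assume "X \<in> {tensor_op a b |a b. b \<in> N}"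
    then obtain a b where "X = tensor_op a b" "b \<in> N" by blast
    then show "X \<in> {X::('h::finite\<times>'k) op. \<forall>i j. blk i j X \<in> N}"
      using N by (simp add: blk_tensor csubspace_def)
  qed
  show "(BH_tensor N :: ('h\<times>'k) op set) \<subseteq> {X. \<forall>i j. blk i j X \<in> N}"
    using cspan_minimal[OF W G] by (simp add: BH_tensor_def)
next
  show "{X. \<forall>i j. blk i j X \<in> N} \<subseteq> (BH_tensor N :: ('h\<times>'k) op set)"
  proof
    fix X :: "('h \<times> 'k) op" assume X: "X \<in> {X. \<forall>i j. blk i j X \<in> N}"
    have "(\<Sum>ij\<in>UNIV. tensor_op (Umat (fst ij) (snd ij)) (blk (fst ij) (snd ij) X)) \<in> BH_tensor N"
      unfolding BH_tensor_def
    proof (rule csubspace_sum[OF csubspace_cspan])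
      fix ij :: "'h \<times> 'h"
      have "blk (fst ij) (snd ij) X \<in> N" using X by simp
      then have "tensor_op (Umat (fst ij) (snd ij)) (blk (fst ij) (snd ij) X) \<in> {tensor_op a b |a b. b \<in> N}"
        by (intro CollectI exI[of _ "Umat (fst ij) (snd ij)"] exI[of _ "blk (fst ij) (snd ij) X"] conjI refl)
      then show "tensor_op (Umat (fst ij) (snd ij)) (blk (fst ij) (snd ij) X) \<in> cspan {tensor_op a b |a b. b \<in> N}"
        by (rule subsetD[OF cspan_superset])
    qed
    then show "X \<in> BH_tensor N" by (subst blk_decomp[of X]) assumption
  qed
qed

lemma ifm1: "(if P then (1::complex) else 0) * x = (if P then x else 0)" by simp
lemma ifm2: "x * (if P then (1::complex) else 0) = (if P then x else 0)" by simp

lemma ifm3: "(x::complex) * (if P then y else 0) = (if P then x * y else 0)" by simp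
lemma ifm4: "(if P then y else 0) * (x::complex) = (if P then y * x else 0)" by simp

lemma sum_if_c: "(\<Sum>y\<in>A. if P then f y else 0) = (if P then (\<Sum>y\<in>A. f y) else (0::complex))" by simp

lemma sum_UNIV_prod: "(\<Sum>p\<in>UNIV. f p) = (\<Sum>x\<in>UNIV. \<Sum>y\<in>UNIV. f (x,y))"
  using sum.cartesian_product[of "\<lambda>x y. f (x,y)" UNIV UNIV] by (simp add: UNIV_Times_UNIV)

lemma blk_left: fixes X :: "('h::finite \<times> 'k::finite) op" shows "blk i j (tensor_op a (mat 1) ** X) = (\<Sum>k\<in>UNIV. cscale (a $ i $ k) (blk k j X))"
proof -
  have "(\<Sum>p\<in>UNIV. a $ i $ fst p * (mat 1 :: complex^'k^'k) $ r $ snd p * X $ p $ (j, s))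
     = (\<Sum>k\<in>UNIV. a $ i $ k * X $ (k, r) $ (j, s))" for r s :: 'k
    by (simp add: sum_UNIV_prod mat_def ifm1 ifm2 ifm3 ifm4 sum_if_c sum.delta sum.delta')
  then show ?thesis
    by (simp add: blk_def vec_eq_iff tensor_op_def matrix_matrix_mult_def cscale_def sum_component)
qed

lemma blk_right: fixes X :: "('h::finite \<times> 'k::finite) op" shows "blk i j (X ** tensor_op b (mat 1)) = (\<Sum>l\<in>UNIV. cscale (b $ l $ j) (blk i l X))"
proof -
  have "(\<Sum>p\<in>UNIV. X $ (i, r) $ p * (b $ fst p $ j * (mat 1 :: complex^'k^'k) $ snd p $ s))
     = (\<Sum>l\<in>UNIV. X $ (i, r) $ (l, s) * b $ l $ j)" for r s :: 'k
    by (simp add: sum_UNIV_prod mat_def ifm1 ifm2 ifm3 ifm4 sum_if_c sum.delta sum.delta')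
  then show ?thesis
    by (simp add: blk_def vec_eq_iff tensor_op_def matrix_matrix_mult_def cscale_def sum_component mult.commute)
qed

lemma blk_center: fixes X :: "('h::finite \<times> 'k::finite) op" shows "blk i j (tensor_op (mat 1) z ** X) = z ** blk i j X"
proof -
  have "(\<Sum>p\<in>UNIV. (mat 1 :: complex^'h^'h) $ i $ fst p * z $ r $ snd p * X $ p $ (j, s))
     = (\<Sum>k\<in>UNIV. z $ r $ k * X $ (i, k) $ (j, s))" for r s :: 'k
    by (simp add: sum_UNIV_prod mat_def ifm1 ifm2 ifm3 ifm4 sum_if_c sum.delta sum.delta')
  then show ?thesis
    by (simp add: blk_def vec_eq_iff tensor_op_def matrix_matrix_mult_def)
qed



lemma iso_add: "star_iso \<psi> N1 N2 \<Longrightarrow> x \<in> N1 \<Longrightarrow> y \<in> N1 \<Longrightarrow> \<psi> (x + y) = \<psi> x + \<psi> y"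
  by (simp add: star_iso_def)
lemma iso_sc: "star_iso \<psi> N1 N2 \<Longrightarrow> x \<in> N1 \<Longrightarrow> \<psi> (cscale c x) = cscale c (\<psi> x)"
  by (simp add: star_iso_def)
lemma iso_mult: "star_iso \<psi> N1 N2 \<Longrightarrow> x \<in> N1 \<Longrightarrow> y \<in> N1 \<Longrightarrow> \<psi> (x ** y) = \<psi> x ** \<psi> y"
  by (simp add: star_iso_def)
lemma iso_adj: "star_iso \<psi> N1 N2 \<Longrightarrow> x \<in> N1 \<Longrightarrow> \<psi> (adj x) = adj (\<psi> x)"
  by (simp add: star_iso_def)
lemma iso_in: "star_iso \<psi> N1 N2 \<Longrightarrow> x \<in> N1 \<Longrightarrow> \<psi> x \<in> N2"
  by (auto simp: star_iso_def bij_betw_def)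
lemma iso_img: "star_iso \<psi> N1 N2 \<Longrightarrow> \<psi> ` N1 = N2"
  by (auto simp: star_iso_def bij_betw_def)

lemma iso_zero: "star_iso \<psi> N1 N2 \<Longrightarrow> csubspace N1 \<Longrightarrow> \<psi> 0 = 0"
  using iso_add[of \<psi> N1 N2 0 0] by (simp add: csubspace_def)

lemma iso_sum:
  assumes "star_iso \<psi> N1 N2" "csubspace N1" "\<And>i. i \<in> I \<Longrightarrow> f i \<in> N1"
  shows "\<psi> (sum f I) = (\<Sum>i\<in>I. \<psi> (f i))"
  using assms(3)
proof (induction I rule: infinite_finite_induct)
  case (infinite A) then show ?case using iso_zero[OF assms(1,2)] by simp
next
  case empty then show ?case using iso_zero[OF assms(1,2)] by simp
next
  case (insert x F)
  have "sum f F \<in> N1" using insert.prems assms(2) by (intro csubspace_sum) auto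
  then show ?case using insert iso_add[OF assms(1)] by simp
qed

lemma iso_inv:
  assumes N1: "vN_algebra N1" and N2: "vN_algebra N2" and iso: "star_iso \<psi> N1 N2"
  shows "star_iso (inv_into N1 \<psi>) N2 N1"
proof -
  have bij: "bij_betw \<psi> N1 N2" using iso by (simp add: star_iso_def)
  let ?g = "inv_into N1 \<psi>"
  have bij': "bij_betw ?g N2 N1" using bij by (rule bij_betw_inv_into)
  have gin: "y \<in> N2 \<Longrightarrow> ?g y \<in> N1" for y using bij' by (auto simp: bij_betw_def)
  have fg: "y \<in> N2 \<Longrightarrow> \<psi> (?g y) = y" for y using bij by (simp add: bij_betw_inv_into_right)
  have gf: "x \<in> N1 \<Longrightarrow> ?g (\<psi> x) = x" for x using bij by (simp add: bij_betw_inv_into_left)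
  have C1: "csubspace N1" and M1: "\<And>x y. x \<in> N1 \<Longrightarrow> y \<in> N1 \<Longrightarrow> x ** y \<in> N1"
    and A1: "\<And>x. x \<in> N1 \<Longrightarrow> adj x \<in> N1" using N1 by (auto simp: vN_algebra_def)
  have add1: "\<And>x y. x \<in> N1 \<Longrightarrow> y \<in> N1 \<Longrightarrow> x + y \<in> N1" and sc1: "\<And>c x. x \<in> N1 \<Longrightarrow> cscale c x \<in> N1"
    using C1 by (auto simp: csubspace_def)
  show ?thesis unfolding star_iso_def
  proof (intro conjI ballI allI bij')
    fix x y assume x: "x \<in> N2" and y: "y \<in> N2"
    have "\<psi> (?g x + ?g y) = x + y" using iso_add[OF iso gin[OF x] gin[OF y]] fg x y by simp
    then show "?g (x + y) = ?g x + ?g y" using gf[OF add1[OF gin[OF x] gin[OF y]]] by simp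
    have "\<psi> (?g x ** ?g y) = x ** y" using iso_mult[OF iso gin[OF x] gin[OF y]] fg x y by simp
    then show "?g (x ** y) = ?g x ** ?g y" using gf[OF M1[OF gin[OF x] gin[OF y]]] by simp
  next
    fix c x assume x: "x \<in> N2"
    have "\<psi> (cscale c (?g x)) = cscale c x" using iso_sc[OF iso gin[OF x]] fg x by simp
    then show "?g (cscale c x) = cscale c (?g x)" using gf[OF sc1[OF gin[OF x], of c]] by simp
  next
    fix x assume x: "x \<in> N2"
    have "\<psi> (adj (?g x)) = adj x" using iso_adj[OF iso gin[OF x]] fg x by simp
    then show "?g (adj x) = adj (?g x)" using gf[OF A1[OF gin[OF x]]] by simp
  qed
qed

lemma iso_center:
  assumes iso: "star_iso \<psi> N1 N2" and z: "z \<in> center N1"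
  shows "\<psi> z \<in> center N2"
proof -
  have zN: "z \<in> N1" and zc: "\<And>a. a \<in> N1 \<Longrightarrow> z ** a = a ** z"
    using z by (auto simp: center_def commutant_def)
  have "\<psi> z ** y = y ** \<psi> z" if y: "y \<in> N2" for y
  proof -
    obtain x where x: "x \<in> N1" "y = \<psi> x" using y iso_img[OF iso] by blast
    show ?thesis using x zN zc[OF x(1)] iso_mult[OF iso] by metis
  qed
  then show ?thesis using iso_in[OF iso zN] by (auto simp: center_def commutant_def)
qed

lemma iso_one:
  assumes N1: "vN_algebra N1" and N2: "vN_algebra N2" and iso: "star_iso \<psi> N1 N2"
  shows "\<psi> (mat 1) = mat 1"
proof -
  have "mat 1 \<in> N2" "mat 1 \<in> N1" using N1 N2 by (auto simp: vN_algebra_def)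
  then obtain u where u: "u \<in> N1" "mat 1 = \<psi> u" using iso_img[OF iso] by blast
  have "\<psi> (mat 1) = \<psi> (mat 1) ** \<psi> u" by (simp add: u(2)[symmetric])
  also have "\<dots> = \<psi> (mat 1 ** u)" using iso_mult[OF iso \<open>mat 1 \<in> N1\<close> u(1)] by simp
  also have "\<dots> = mat 1" using u by simp
  finally show ?thesis .
qed

definition bmap :: "('k1::finite op \<Rightarrow> 'k2::finite op) \<Rightarrow> ('h::finite \<times> 'k1) op \<Rightarrow> ('h \<times> 'k2) op" where
  "bmap \<psi> X = (\<chi> p q. \<psi> (blk (fst p) (fst q) X) $ snd p $ snd q)"

lemma blk_bmap: "blk i j (bmap \<psi> X) = \<psi> (blk i j X)"
  by (simp add: blk_def bmap_def vec_eq_iff)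

lemma bmap_qmr:
  fixes M :: "'h::finite op set" and N1 :: "'k1::finite op set" and N2 :: "'k2::finite op set"
  assumes N1: "vN_algebra N1" and N2: "vN_algebra N2" and iso: "star_iso \<psi> N1 N2"
    and iso': "star_iso \<theta> N2 N1" and inv: "\<And>y. y \<in> N2 \<Longrightarrow> \<psi> (\<theta> y) = y"
    and V: "quantum_multi_relation M N1 V"
  shows "quantum_multi_relation M N2 (bmap \<psi> ` V)"
proof -
  have C1: "csubspace N1" and C2: "csubspace N2" using N1 N2 by (auto simp: vN_algebra_def)
  have M1: "\<And>x y. x \<in> N1 \<Longrightarrow> y \<in> N1 \<Longrightarrow> x ** y \<in> N1" using N1 by (auto simp: vN_algebra_def)
  have add1: "\<And>x y. x \<in> N1 \<Longrightarrow> y \<in> N1 \<Longrightarrow> x + y \<in> N1" and sc1: "\<And>c x. x \<in> N1 \<Longrightarrow> cscale c x \<in> N1"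
    using C1 by (auto simp: csubspace_def)
  have VC: "csubspace V" and VB: "V \<subseteq> BH_tensor N1"
    and Vbi: "\<And>a b v. a \<in> commutant M \<Longrightarrow> b \<in> commutant M \<Longrightarrow> v \<in> V \<Longrightarrow>
        tensor_op a (mat 1) ** v ** tensor_op b (mat 1) \<in> V"
    and Vz: "\<And>z v. z \<in> center N1 \<Longrightarrow> v \<in> V \<Longrightarrow> tensor_op (mat 1) z ** v \<in> V"
    using V unfolding quantum_multi_relation_def by auto
  have blkV: "X \<in> V \<Longrightarrow> blk i j X \<in> N1" for X i j
    using VB BH_tensor_iff[OF C1] by blast
  have bm_add: "bmap \<psi> (X + Y) = bmap \<psi> X + bmap \<psi> Y" if "X \<in> V" "Y \<in> V" for X Y
    using that by (simp add: blk_ext blk_bmap blk_add iso_add[OF iso] blkV)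
  have bm_sc: "bmap \<psi> (cscale c X) = cscale c (bmap \<psi> X)" if "X \<in> V" for X c
    using that by (simp add: blk_ext blk_bmap blk_cscale iso_sc[OF iso] blkV)
  have V0: "0 \<in> V" and Vadd: "\<And>x y. x \<in> V \<Longrightarrow> y \<in> V \<Longrightarrow> x + y \<in> V"
    and Vsc: "\<And>c x. x \<in> V \<Longrightarrow> cscale c x \<in> V" using VC by (auto simp: csubspace_def)
  have bm0: "bmap \<psi> 0 = 0"
    by (simp add: blk_ext blk_bmap blk_zero iso_zero[OF iso C1])
  have CS: "csubspace (bmap \<psi> ` V)"
    unfolding csubspace_def
  proof (intro conjI ballI allI)
    show "0 \<in> bmap \<psi> ` V" using V0 bm0 by (metis image_eqI)
  next
    fix x y assume "x \<in> bmap \<psi> ` V" "y \<in> bmap \<psi> ` V"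
    then obtain X Y where "X \<in> V" "Y \<in> V" "x = bmap \<psi> X" "y = bmap \<psi> Y" by auto
    then show "x + y \<in> bmap \<psi> ` V" using bm_add Vadd by (metis image_eqI)
  next
    fix c x assume "x \<in> bmap \<psi> ` V"
    then obtain X where "X \<in> V" "x = bmap \<psi> X" by auto
    then show "cscale c x \<in> bmap \<psi> ` V" using bm_sc Vsc by (metis image_eqI)
  qed
  have SB: "bmap \<psi> ` V \<subseteq> BH_tensor N2"
    using BH_tensor_iff[OF C2] blkV iso_in[OF iso] by (auto simp: blk_bmap)
  have BI: "tensor_op a (mat 1) ** bmap \<psi> X ** tensor_op b (mat 1) = bmap \<psi> (tensor_op a (mat 1) ** X ** tensor_op b (mat 1))"
    if X: "X \<in> V" for a b X
  proof -
    have in1: "(\<Sum>k\<in>UNIV. cscale (a $ i $ k) (blk k l X)) \<in> N1" for i l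
      by (rule csub_sum_sc[OF C1]) (use blkV X in auto)
    have "\<psi> (\<Sum>l\<in>UNIV. cscale (b $ l $ j) (\<Sum>k\<in>UNIV. cscale (a $ i $ k) (blk k l X)))
       = (\<Sum>l\<in>UNIV. cscale (b $ l $ j) (\<Sum>k\<in>UNIV. cscale (a $ i $ k) (\<psi> (blk k l X))))" for i j
    proof -
      have "\<psi> (\<Sum>l\<in>UNIV. cscale (b $ l $ j) (\<Sum>k\<in>UNIV. cscale (a $ i $ k) (blk k l X)))
         = (\<Sum>l\<in>UNIV. \<psi> (cscale (b $ l $ j) (\<Sum>k\<in>UNIV. cscale (a $ i $ k) (blk k l X))))"
        by (rule iso_sum[OF iso C1]) (use in1 sc1 in auto)
      also have "\<dots> = (\<Sum>l\<in>UNIV. cscale (b $ l $ j) (\<psi> (\<Sum>k\<in>UNIV. cscale (a $ i $ k) (blk k l X))))"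
        using iso_sc[OF iso in1] by simp
      also have "\<dots> = (\<Sum>l\<in>UNIV. cscale (b $ l $ j) (\<Sum>k\<in>UNIV. \<psi> (cscale (a $ i $ k) (blk k l X))))"
        by (subst iso_sum[OF iso C1]) (use sc1 blkV X in auto)
      also have "\<dots> = (\<Sum>l\<in>UNIV. cscale (b $ l $ j) (\<Sum>k\<in>UNIV. cscale (a $ i $ k) (\<psi> (blk k l X))))"
        using iso_sc[OF iso blkV[OF X]] by simp
      finally show ?thesis .
    qed
    then show ?thesis
      by (simp add: blk_ext blk_right blk_left blk_bmap)
  qed
  show ?thesis unfolding quantum_multi_relation_def
  proof (intro conjI CS SB ballI)
    fix a b v assume a: "a \<in> commutant M" and b: "b \<in> commutant M" and v: "v \<in> bmap \<psi> ` V"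
    then obtain X where X: "X \<in> V" "v = bmap \<psi> X" by auto
    show "tensor_op a (mat 1) ** v ** tensor_op b (mat 1) \<in> bmap \<psi> ` V"
      using BI[OF X(1)] Vbi[OF a b X(1)] X(2) by (metis image_eqI)
  next
    fix z v assume z: "z \<in> center N2" and v: "v \<in> bmap \<psi> ` V"
    then obtain X where X: "X \<in> V" "v = bmap \<psi> X" by auto
    have z1: "\<theta> z \<in> center N1" using iso_center[OF iso' z] .
    have zN: "z \<in> N2" using z by (simp add: center_def)
    have "tensor_op (mat 1) z ** bmap \<psi> X = bmap \<psi> (tensor_op (mat 1) (\<theta> z) ** X)"
    proof -
      have "z ** \<psi> (blk i j X) = \<psi> (\<theta> z ** blk i j X)" for i j
        using iso_mult[OF iso _ blkV[OF X(1)], of "\<theta> z"] z1 inv[OF zN]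
        by (simp add: center_def)
      then show ?thesis by (simp add: blk_ext blk_center blk_bmap)
    qed
    then show "tensor_op (mat 1) z ** v \<in> bmap \<psi> ` V"
      using Vz[OF z1 X(1)] X(2) by (metis image_eqI)
  qed
qed

lemma bmap_inv:
  assumes "V \<subseteq> BH_tensor N1" "csubspace N1" "\<And>x. x \<in> N1 \<Longrightarrow> \<theta> (\<psi> x) = x"
  shows "bmap \<theta> ` bmap \<psi> ` V = V"
proof -
  have "bmap \<theta> (bmap \<psi> X) = X" if "X \<in> V" for X
  proof -
    have "blk i j X \<in> N1" for i j using that assms(1) BH_tensor_iff[OF assms(2)] by blast
    then show ?thesis using assms(3) by (simp add: blk_ext blk_bmap)
  qed
  then show ?thesis by (force simp: image_image)
qed

lemma bmap_bij:
  fixes M :: "'h::finite op set" and N1 :: "'k1::finite op set" and N2 :: "'k2::finite op set"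
  assumes N1: "vN_algebra N1" and N2: "vN_algebra N2" and iso: "star_iso \<psi> N1 N2"
  shows "bij_betw (image (bmap \<psi> :: ('h\<times>'k1) op \<Rightarrow> _)) {V. quantum_multi_relation M N1 V}
            {V. quantum_multi_relation M N2 V}"
proof -
  let ?g = "inv_into N1 \<psi>"
  have iso': "star_iso ?g N2 N1" by (rule iso_inv[OF N1 N2 iso])
  have bij: "bij_betw \<psi> N1 N2" using iso by (simp add: star_iso_def)
  have fg: "y \<in> N2 \<Longrightarrow> \<psi> (?g y) = y" for y using bij by (simp add: bij_betw_inv_into_right)
  have gf: "x \<in> N1 \<Longrightarrow> ?g (\<psi> x) = x" for x using bij by (simp add: bij_betw_inv_into_left)
  have C1: "csubspace N1" and C2: "csubspace N2" using N1 N2 by (auto simp: vN_algebra_def)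
  show ?thesis
  proof (rule bij_betw_byWitness[where f' = "image (bmap ?g)"])
    show "\<forall>a\<in>{V. quantum_multi_relation M N1 V}. bmap ?g ` bmap \<psi> ` a = a"
    proof
      fix V assume "V \<in> {V. quantum_multi_relation M N1 V}"
      then have "V \<subseteq> BH_tensor N1" by (simp add: quantum_multi_relation_def)
      from bmap_inv[OF this C1, of ?g \<psi>] gf show "bmap ?g ` bmap \<psi> ` V = V" by blast
    qed
    show "\<forall>a\<in>{V. quantum_multi_relation M N2 V}. bmap \<psi> ` bmap ?g ` a = a"
    proof
      fix V assume "V \<in> {V. quantum_multi_relation M N2 V}"
      then have "V \<subseteq> BH_tensor N2" by (simp add: quantum_multi_relation_def)
      from bmap_inv[OF this C2, of \<psi> ?g] fg show "bmap \<psi> ` bmap ?g ` V = V" by blast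
    qed
    show "image (bmap \<psi>) ` {V. quantum_multi_relation M N1 V} \<subseteq> {V. quantum_multi_relation M N2 V}"
      using bmap_qmr[OF N1 N2 iso iso' fg] by auto
    show "image (bmap ?g) ` {V. quantum_multi_relation M N2 V} \<subseteq> {V. quantum_multi_relation M N1 V}"
      using bmap_qmr[OF N2 N1 iso' iso gf] by auto
  qed
qed



definition TR :: "(complex^'h1^'h2) set \<Rightarrow> (complex^'h2^'h1) set \<Rightarrow> ('h1::finite \<times> 'k::finite) op set
    \<Rightarrow> ('h2::finite \<times> 'k) op set" where
  "TR A B V = cspan {tens c (mat 1) ** X ** tens d (mat 1) | c d X. c \<in> A \<and> d \<in> B \<and> X \<in> V}"

lemma matrix_add_rdistrib': "((B + C) ** A) = (B ** A) + (C ** A)"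
  by (simp add: matrix_matrix_mult_def vec_eq_iff sum.distrib distrib_right)

lemma lin_add: "P ** (Y1 + Y2) ** Q = P ** Y1 ** Q + P ** Y2 ** Q"
  by (simp add: matrix_add_ldistrib matrix_add_rdistrib')
lemma lin_sc: "P ** cscale c Y ** Q = cscale c (P ** Y ** Q)"
  by (simp add: cscale_csc csc_mult_left csc_mult_right)
lemma lin_add1: "P ** (Y1 + Y2) = P ** Y1 + P ** Y2"
  by (simp add: matrix_add_ldistrib)
lemma lin_sc1: "P ** cscale c Y = cscale c (P ** Y)"
  by (simp add: cscale_csc csc_mult_right)

lemma BH_csub: "csubspace (BH_tensor N)"
  by (simp add: BH_tensor_def csubspace_cspan)

lemma TR_gen: "c \<in> A \<Longrightarrow> d \<in> B \<Longrightarrow> X \<in> V \<Longrightarrow> tens c (mat 1) ** X ** tens d (mat 1) \<in> TR A B V"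
  unfolding TR_def
  by (rule subsetD[OF cspan_superset]) blast

lemma TR_qmr:
  fixes A :: "(complex^'h1::finite^'h2::finite) set" and B :: "(complex^'h2^'h1) set"
    and M :: "'h2 op set" and N :: "'k::finite op set" and V :: "('h1 \<times> 'k) op set"
  assumes AC: "\<And>a c. a \<in> commutant M \<Longrightarrow> c \<in> A \<Longrightarrow> a ** c \<in> A"
    and BC: "\<And>d b. d \<in> B \<Longrightarrow> b \<in> commutant M \<Longrightarrow> d ** b \<in> B"
    and VB: "V \<subseteq> BH_tensor N"
    and Vz: "\<And>z X. z \<in> center N \<Longrightarrow> X \<in> V \<Longrightarrow> tensor_op (mat 1) z ** X \<in> V"
  shows "quantum_multi_relation M N (TR A B V)"
  unfolding quantum_multi_relation_def
proof (intro conjI ballI)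
  show "csubspace (TR A B V)" by (simp add: TR_def csubspace_cspan)
next
  let ?G = "{tens c (mat 1) ** X ** tens d (mat 1) | c d X. c \<in> A \<and> d \<in> B \<and> X \<in> V}"
  have "?G \<subseteq> BH_tensor N"
  proof
    fix g :: "('h2 \<times> 'k) op" assume "g \<in> ?G"
    then obtain c d X where g: "g = tens c (mat 1) ** X ** tens d (mat 1)" "c \<in> A" "d \<in> B" "X \<in> V"
      by blast
    have "X \<in> cspan {tensor_op a b |a b. b \<in> N}" using g(4) VB by (auto simp: BH_tensor_def)
    then have "tens c (mat 1) ** X ** tens d (mat 1) \<in> BH_tensor N"
    proof (rule cspan_map[OF lin_add lin_sc BH_csub, rotated])
      fix Y :: "('h1 \<times> 'k) op" assume "Y \<in> {tensor_op a b |a b. b \<in> N}"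
      then obtain a b where Y: "Y = tensor_op a b" "b \<in> N" by blast
      have "tens c (mat 1) ** Y ** tens d (mat 1) = tensor_op (c ** a ** d) b"
        by (simp add: Y tensor_op_tens tens_mult)
      also have "\<dots> \<in> BH_tensor N" unfolding BH_tensor_def
        by (rule subsetD[OF cspan_superset], rule CollectI, rule exI[of _ "c ** a ** d"], rule exI[of _ b])
          (simp add: Y(2))
      finally show "tens c (mat 1) ** Y ** tens d (mat 1) \<in> BH_tensor N" .
    qed
    then show "g \<in> BH_tensor N" using g(1) by simp
  qed
  then show "TR A B V \<subseteq> BH_tensor N" unfolding TR_def by (rule cspan_minimal[OF BH_csub])
next
  fix a b v assume a: "a \<in> commutant M" and b: "b \<in> commutant M" and v: "v \<in> TR A B V"
  show "tensor_op a (mat 1) ** v ** tensor_op b (mat 1) \<in> TR A B V"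
    using v[unfolded TR_def]
  proof (rule cspan_map[OF lin_add lin_sc, rotated 2])
    show "csubspace (TR A B V)" by (simp add: TR_def csubspace_cspan)
    fix g :: "('h2 \<times> 'k) op" assume "g \<in> {tens c (mat 1) ** X ** tens d (mat 1) | c d X. c \<in> A \<and> d \<in> B \<and> X \<in> V}"
    then obtain c d X where g: "g = tens c (mat 1) ** X ** tens d (mat 1)" "c \<in> A" "d \<in> B" "X \<in> V"
      by blast
    have e1: "tens (a ** c) (mat 1) = tens a (mat 1) ** tens c (mat 1 :: complex^'k^'k)" by (simp add: tens_mult)
    have e2: "tens (d ** b) (mat 1) = tens d (mat 1) ** tens b (mat 1 :: complex^'k^'k)" by (simp add: tens_mult)
    have "tensor_op a (mat 1) ** g ** tensor_op b (mat 1) = tens (a ** c) (mat 1) ** X ** tens (d ** b) (mat 1)"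
      by (simp only: g e1 e2 tensor_op_tens matrix_mul_assoc)
    also have "\<dots> \<in> TR A B V" by (rule TR_gen) (use g AC[OF a] BC[OF _ b] in auto)
    finally show "tensor_op a (mat 1) ** g ** tensor_op b (mat 1) \<in> TR A B V" .
  qed
next
  fix z v assume z: "z \<in> center N" and v: "v \<in> TR A B V"
  show "tensor_op (mat 1) z ** v \<in> TR A B V"
    using v[unfolded TR_def]
  proof (rule cspan_map[OF lin_add1 lin_sc1, rotated 2])
    show "csubspace (TR A B V)" by (simp add: TR_def csubspace_cspan)
    fix g :: "('h2 \<times> 'k) op" assume "g \<in> {tens c (mat 1) ** X ** tens d (mat 1) | c d X. c \<in> A \<and> d \<in> B \<and> X \<in> V}"
    then obtain c d X where g: "g = tens c (mat 1) ** X ** tens d (mat 1)" "c \<in> A" "d \<in> B" "X \<in> V"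
      by blast
    have e: "tens (mat 1) z ** tens c (mat 1) = tens c (mat 1) ** tens (mat 1) z"
      by (simp add: tens_mult)
    have "tensor_op (mat 1) z ** g = tens c (mat 1) ** (tensor_op (mat 1) z ** X) ** tens d (mat 1)"
      by (simp only: g e tensor_op_tens matrix_mul_assoc)
    also have "\<dots> \<in> TR A B V" by (rule TR_gen) (use g Vz[OF z] in auto)
    finally show "tensor_op (mat 1) z ** g \<in> TR A B V" .
  qed
qed

lemma TR_inv:
  fixes A :: "(complex^'h1::finite^'h2::finite) set" and B :: "(complex^'h2^'h1) set"
    and M :: "'h1 op set" and N :: "'k::finite op set" and V :: "('h1 \<times> 'k) op set"
    and ds :: "'i::finite \<Rightarrow> complex^'h2^'h1" and cs :: "'i \<Rightarrow> complex^'h1^'h2"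
  assumes DC: "\<And>d c. d \<in> B \<Longrightarrow> c \<in> A \<Longrightarrow> d ** c \<in> commutant M"
    and ds: "\<And>i. ds i \<in> B" and cs: "\<And>i. cs i \<in> A" and U: "(\<Sum>i\<in>UNIV. ds i ** cs i) = mat 1"
    and V: "quantum_multi_relation M N V"
  shows "TR B A (TR A B V) = V"
proof
  have VC: "csubspace V"
    and Vbi: "\<And>a b v. a \<in> commutant M \<Longrightarrow> b \<in> commutant M \<Longrightarrow> v \<in> V \<Longrightarrow>
        tensor_op a (mat 1) ** v ** tensor_op b (mat 1) \<in> V"
    using V unfolding quantum_multi_relation_def by auto
  have "{tens d (mat 1) ** Y ** tens c (mat 1) | d c Y. d \<in> B \<and> c \<in> A \<and> Y \<in> TR A B V} \<subseteq> V"
  proof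
    fix g :: "('h1 \<times> 'k) op" assume "g \<in> {tens d (mat 1) ** Y ** tens c (mat 1) | d c Y. d \<in> B \<and> c \<in> A \<and> Y \<in> TR A B V}"
    then obtain d c Y where g: "g = tens d (mat 1) ** Y ** tens c (mat 1)" "d \<in> B" "c \<in> A" "Y \<in> TR A B V"
      by blast
    have "tens d (mat 1) ** Y ** tens c (mat 1) \<in> V"
      using g(4)[unfolded TR_def]
    proof (rule cspan_map[OF lin_add lin_sc VC, rotated])
      fix h :: "('h2 \<times> 'k) op" assume "h \<in> {tens c (mat 1) ** X ** tens d (mat 1) | c d X. c \<in> A \<and> d \<in> B \<and> X \<in> V}"
      then obtain c' d' X where h: "h = tens c' (mat 1) ** X ** tens d' (mat 1)" "c' \<in> A" "d' \<in> B" "X \<in> V"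
        by blast
      have e1: "tens (d ** c') (mat 1) = tens d (mat 1) ** tens c' (mat 1 :: complex^'k^'k)" by (simp add: tens_mult)
      have e2: "tens (d' ** c) (mat 1) = tens d' (mat 1) ** tens c (mat 1 :: complex^'k^'k)" by (simp add: tens_mult)
      have "tens d (mat 1) ** h ** tens c (mat 1) = tensor_op (d ** c') (mat 1) ** X ** tensor_op (d' ** c) (mat 1)"
        by (simp only: h e1 e2 tensor_op_tens matrix_mul_assoc)
      also have "\<dots> \<in> V" by (rule Vbi) (use DC g h in auto)
      finally show "tens d (mat 1) ** h ** tens c (mat 1) \<in> V" .
    qed
    then show "g \<in> V" using g(1) by simp
  qed
  then show "TR B A (TR A B V) \<subseteq> V" unfolding TR_def[of B A] by (rule cspan_minimal[OF VC])
next
  show "V \<subseteq> TR B A (TR A B V)"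
  proof
    fix X assume X: "X \<in> V"
    have CS: "csubspace (TR B A (TR A B V))" by (simp add: TR_def csubspace_cspan)
    have one: "tens (mat 1 :: complex^'h1^'h1) (mat 1 :: complex^'k^'k) = (\<Sum>i\<in>UNIV. tens (ds i ** cs i) (mat 1))"
      by (simp add: U[symmetric] tens_sum_left)
    have "X = tens (mat 1 :: complex^'h1^'h1) (mat 1 :: complex^'k^'k) ** X ** tens (mat 1 :: complex^'h1^'h1) (mat 1 :: complex^'k^'k)"
      by (simp add: tens_one)
    also have "\<dots> = (\<Sum>i\<in>UNIV. \<Sum>j\<in>UNIV. tens (ds i ** cs i) (mat 1) ** X ** tens (ds j ** cs j) (mat 1))"
      by (simp only: one mult_sum_left mult_sum_right) (rule sum.swap)
    also have "\<dots> \<in> TR B A (TR A B V)"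
    proof (intro csubspace_sum[OF CS])
      fix i j
      have e1: "tens (ds i ** cs i) (mat 1) = tens (ds i) (mat 1) ** tens (cs i) (mat 1 :: complex^'k^'k)" by (simp add: tens_mult)
      have e2: "tens (ds j ** cs j) (mat 1) = tens (ds j) (mat 1) ** tens (cs j) (mat 1 :: complex^'k^'k)" by (simp add: tens_mult)
      have "tens (ds i ** cs i) (mat 1) ** X ** tens (ds j ** cs j) (mat 1)
          = tens (ds i) (mat 1) ** (tens (cs i) (mat 1) ** X ** tens (ds j) (mat 1)) ** tens (cs j) (mat 1)"
        by (simp only: e1 e2 matrix_mul_assoc)
      also have "\<dots> \<in> TR B A (TR A B V)"
        by (intro TR_gen ds cs X)
      finally show "tens (ds i ** cs i) (mat 1) ** X ** tens (ds j ** cs j) (mat 1) \<in> TR B A (TR A B V)" .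
    qed
    finally show "X \<in> TR B A (TR A B V)" .
  qed
qed

lemma TR_bij:
  fixes A :: "(complex^'h1::finite^'h2::finite) set" and B :: "(complex^'h2^'h1) set"
    and M1 :: "'h1 op set" and M2 :: "'h2 op set" and N :: "'k::finite op set"
    and ds :: "'i::finite \<Rightarrow> complex^'h2^'h1" and cs :: "'i \<Rightarrow> complex^'h1^'h2"
    and ds' :: "'j::finite \<Rightarrow> complex^'h2^'h1" and cs' :: "'j \<Rightarrow> complex^'h1^'h2"
  assumes N: "csubspace N"
    and A1: "\<And>a c. a \<in> commutant M2 \<Longrightarrow> c \<in> A \<Longrightarrow> a ** c \<in> A"
    and A2: "\<And>c b. c \<in> A \<Longrightarrow> b \<in> commutant M1 \<Longrightarrow> c ** b \<in> A"
    and B1: "\<And>b d. b \<in> commutant M1 \<Longrightarrow> d \<in> B \<Longrightarrow> b ** d \<in> B"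
    and B2: "\<And>d a. d \<in> B \<Longrightarrow> a \<in> commutant M2 \<Longrightarrow> d ** a \<in> B"
    and DC: "\<And>d c. d \<in> B \<Longrightarrow> c \<in> A \<Longrightarrow> d ** c \<in> commutant M1"
    and CD: "\<And>c d. c \<in> A \<Longrightarrow> d \<in> B \<Longrightarrow> c ** d \<in> commutant M2"
    and ds: "\<And>i. ds i \<in> B" and cs: "\<And>i. cs i \<in> A" and U1: "(\<Sum>i\<in>UNIV. ds i ** cs i) = mat 1"
    and ds': "\<And>i. ds' i \<in> B" and cs': "\<And>i. cs' i \<in> A" and U2: "(\<Sum>i\<in>UNIV. cs' i ** ds' i) = mat 1"
  shows "bij_betw (TR A B :: ('h1 \<times> 'k) op set \<Rightarrow> _) {V. quantum_multi_relation M1 N V} {V. quantum_multi_relation M2 N V}"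
proof (rule bij_betw_byWitness[where f' = "TR B A"])
  show "\<forall>V\<in>{V. quantum_multi_relation M1 N V}. TR B A (TR A B V) = V"
    using TR_inv[OF DC ds cs U1] by auto
  show "\<forall>V\<in>{V. quantum_multi_relation M2 N V}. TR A B (TR B A V) = V"
    using TR_inv[OF CD cs' ds' U2] by auto
  show "TR A B ` {V. quantum_multi_relation M1 N V} \<subseteq> {V. quantum_multi_relation M2 N V}"
  proof
    fix W assume "W \<in> TR A B ` {V. quantum_multi_relation M1 N V}"
    then obtain V where V: "quantum_multi_relation M1 N V" "W = TR A B V" by auto
    show "W \<in> {V. quantum_multi_relation M2 N V}"
      using TR_qmr[OF A1 B2, where N=N and V=V] V by (auto simp: quantum_multi_relation_def)
  qed
  show "TR B A ` {V. quantum_multi_relation M2 N V} \<subseteq> {V. quantum_multi_relation M1 N V}"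
  proof
    fix W assume "W \<in> TR B A ` {V. quantum_multi_relation M2 N V}"
    then obtain V where V: "quantum_multi_relation M2 N V" "W = TR B A V" by auto
    show "W \<in> {V. quantum_multi_relation M1 N V}"
      using TR_qmr[OF B1 A2, where N=N and V=V] V by (auto simp: quantum_multi_relation_def)
  qed
qed



lemma sum3_swap: "(\<Sum>i\<in>A. \<Sum>j\<in>B. \<Sum>k\<in>C. f i j k) = (\<Sum>k\<in>C. \<Sum>j\<in>B. \<Sum>i\<in>A. f i j k)"
proof -
  have "(\<Sum>i\<in>A. \<Sum>j\<in>B. \<Sum>k\<in>C. f i j k) = (\<Sum>i\<in>A. \<Sum>k\<in>C. \<Sum>j\<in>B. f i j k)"
    by (rule sum.cong[OF refl], rule sum.swap)
  also have "\<dots> = (\<Sum>k\<in>C. \<Sum>i\<in>A. \<Sum>j\<in>B. f i j k)" by (rule sum.swap)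
  also have "\<dots> = (\<Sum>k\<in>C. \<Sum>j\<in>B. \<Sum>i\<in>A. f i j k)"
    by (rule sum.cong[OF refl], rule sum.swap)
  finally show ?thesis .
qed

lemma inner_mat: "inner (X::complex^'n^'m) Y = Re (\<Sum>i\<in>UNIV. \<Sum>j\<in>UNIV. X$i$j * cnj (Y$i$j))"
  by (simp add: inner_vec_def inner_complex_def)

lemma inner_mult_left:
  fixes a :: "complex^'n^'m" and z :: "complex^'p^'n" and w :: "complex^'p^'m"
  shows "inner (a ** z) w = inner z (adjr a ** w)"
proof -
  have "(\<Sum>i\<in>UNIV. \<Sum>j\<in>UNIV. (a ** z)$i$j * cnj (w$i$j))
      = (\<Sum>i\<in>UNIV. \<Sum>j\<in>UNIV. \<Sum>k\<in>UNIV. a$i$k * z$k$j * cnj (w$i$j))"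
    by (simp add: matrix_matrix_mult_def sum_distrib_right)
  also have "\<dots> = (\<Sum>k\<in>UNIV. \<Sum>j\<in>UNIV. \<Sum>i\<in>UNIV. a$i$k * z$k$j * cnj (w$i$j))"
    by (rule sum3_swap)
  also have "\<dots> = (\<Sum>k\<in>UNIV. \<Sum>j\<in>UNIV. z$k$j * cnj ((adjr a ** w)$k$j))"
    by (simp add: matrix_matrix_mult_def adjr_def sum_distrib_left ac_simps)
  finally show ?thesis by (simp only: inner_mat)
qed

lemma inner_cscale: "inner (cscale c z) w = inner z (cscale (cnj c) w)"
  by (simp add: inner_mat cscale_def ac_simps)

lemma scaleR_csc: "scaleR r (x::complex^'n^'m) = csc (of_real r) x"
  by (simp add: csc_def vec_eq_iff) (simp add: scaleR_conv_of_real)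

lemma csub_diff: "csubspace M \<Longrightarrow> x \<in> M \<Longrightarrow> y \<in> M \<Longrightarrow> x - y \<in> M"
proof -
  assume M: "csubspace M" and x: "x \<in> M" and y: "y \<in> M"
  have "cscale (-1) y = - y" by (simp add: cscale_def vec_eq_iff)
  then have "x + cscale (-1) y = x - y" by simp
  moreover have "x + cscale (-1) y \<in> M" using M x y by (simp add: csubspace_def)
  ultimately show ?thesis by simp
qed

lemma csub_subspace: "csubspace M \<Longrightarrow> subspace M"
  unfolding subspace_def csubspace_def by (simp add: scaleR_csc cscale_csc[symmetric])

lemma matrix_sub_ldistrib': "A ** (B - C) = A ** B - A ** (C::'a::comm_ring_1^'n^'m)"
  by (simp add: matrix_matrix_mult_def vec_eq_iff sum_subtractf right_diff_distrib)

definition Eproj :: "'a::finite op set \<Rightarrow> 'a op \<Rightarrow> 'a op" where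
  "Eproj M x = (SOME y. y \<in> M \<and> (\<forall>w\<in>M. inner (x - y) w = 0))"

lemma Eproj_ex:
  assumes "csubspace M" shows "\<exists>y. y \<in> M \<and> (\<forall>w\<in>M. inner (x - y) w = 0)"
proof -
  have sp: "span M = M" using csub_subspace[OF assms] by simp
  obtain y z where "y \<in> span M" "\<And>w. w \<in> span M \<Longrightarrow> orthogonal z w" "x = y + z"
    using orthogonal_subspace_decomp_exists[of M x] by metis
  then show ?thesis unfolding sp orthogonal_def by (intro exI[of _ y]) auto
qed

lemma Eproj_char:
  assumes M: "csubspace M" and y: "y \<in> M" and o: "\<forall>w\<in>M. inner (x - y) w = 0"
  shows "Eproj M x = y"
proof -
  let ?y = "Eproj M x"
  have y': "?y \<in> M" "\<forall>w\<in>M. inner (x - ?y) w = 0"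
    using someI_ex[OF Eproj_ex[OF M, of x]] unfolding Eproj_def by auto
  have d: "?y - y \<in> M" using csub_diff[OF M y'(1) y] .
  have "inner (?y - y) (?y - y) = inner (x - y) (?y - y) - inner (x - ?y) (?y - y)"
    by (simp add: inner_diff_left)
  also have "\<dots> = 0" using o y'(2) d by simp
  finally show ?thesis by simp
qed

lemma Eproj_in: "csubspace M \<Longrightarrow> Eproj M x \<in> M"
  using someI_ex[OF Eproj_ex, of M x] unfolding Eproj_def by auto

lemma Eproj_orth: "csubspace M \<Longrightarrow> w \<in> M \<Longrightarrow> inner (x - Eproj M x) w = 0"
  using someI_ex[OF Eproj_ex, of M x] unfolding Eproj_def by auto

lemma Eproj_id: "csubspace M \<Longrightarrow> x \<in> M \<Longrightarrow> Eproj M x = x"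
  by (rule Eproj_char) auto

lemma Eproj_add: "csubspace M \<Longrightarrow> Eproj M (x + y) = Eproj M x + Eproj M y"
proof (rule Eproj_char)
  assume M: "csubspace M"
  show "Eproj M x + Eproj M y \<in> M" using M Eproj_in[OF M] by (simp add: csubspace_def)
  have e: "x + y - (Eproj M x + Eproj M y) = (x - Eproj M x) + (y - Eproj M y)" by (simp add: algebra_simps)
  show "\<forall>w\<in>M. inner (x + y - (Eproj M x + Eproj M y)) w = 0"
    unfolding e by (simp add: inner_add_left Eproj_orth[OF M])
qed

lemma Eproj_sc: "csubspace M \<Longrightarrow> Eproj M (cscale c x) = cscale c (Eproj M x)"
proof (rule Eproj_char)
  assume M: "csubspace M"
  show "cscale c (Eproj M x) \<in> M" using M Eproj_in[OF M] by (simp add: csubspace_def)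
  have e: "cscale c x - cscale c (Eproj M x) = cscale c (x - Eproj M x)" by (simp add: cscale_csc csc_diff)
  have "w \<in> M \<Longrightarrow> cscale (cnj c) w \<in> M" for w using M by (simp add: csubspace_def)
  then show "\<forall>w\<in>M. inner (cscale c x - cscale c (Eproj M x)) w = 0"
    unfolding e by (simp add: inner_cscale Eproj_orth[OF M])
qed

lemma Eproj_mult:
  assumes N: "vN_algebra M" and a: "a \<in> M"
  shows "Eproj M (a ** x) = a ** Eproj M x"
proof (rule Eproj_char)
  have M: "csubspace M" using N by (simp add: vN_algebra_def)
  show "a ** Eproj M x \<in> M" using N a Eproj_in[OF M] by (simp add: vN_algebra_def)
  have e: "a ** x - a ** Eproj M x = a ** (x - Eproj M x)" by (simp add: matrix_sub_ldistrib')
  have "w \<in> M \<Longrightarrow> adjr a ** w \<in> M" for w using N a by (simp add: vN_algebra_def adj_adjr[symmetric])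
  then show "\<forall>w\<in>M. inner (a ** x - a ** Eproj M x) w = 0"
    unfolding e by (simp add: inner_mult_left Eproj_orth[OF M])
qed (use N in \<open>simp add: vN_algebra_def\<close>)

definition cip :: "complex^'n \<Rightarrow> complex^'n \<Rightarrow> complex" where
  "cip x y = (\<Sum>r\<in>UNIV. x$r * cnj (y$r))"

lemma cip_sum: "cip (sum f I) z = (\<Sum>k\<in>I. cip (f k) z)"
  apply (cases "finite I")
   apply (simp add: cip_def sum_distrib_right)
   apply (rule sum.swap)
  apply (simp add: cip_def)
  done

lemma cip_adj: "cip ((c::complex^'n^'m) *v w) v = cip w (adjr c *v v)"
proof -
  have "cip (c *v w) v = (\<Sum>r\<in>UNIV. \<Sum>t\<in>UNIV. c$r$t * w$t * cnj (v$r))"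
    by (simp add: cip_def matrix_vector_mult_def sum_distrib_right)
  also have "\<dots> = (\<Sum>t\<in>UNIV. \<Sum>r\<in>UNIV. c$r$t * w$t * cnj (v$r))" by (rule sum.swap)
  also have "\<dots> = cip w (adjr c *v v)"
    by (simp add: cip_def matrix_vector_mult_def adjr_def sum_distrib_left ac_simps)
  finally show ?thesis .
qed

lemma cip_self: "cip w w = of_real (\<Sum>r\<in>UNIV. (cmod (w$r))^2)"
proof -
  have "w$r * cnj (w$r) = of_real ((cmod (w$r))^2)" for r by (rule complex_norm_square[symmetric])
  then show ?thesis by (simp only: cip_def of_real_sum)
qed

lemma cip_self_eq0: "cip w w = 0 \<Longrightarrow> w = 0"
proof -
  assume "cip w w = 0"
  then have "complex_of_real (\<Sum>r\<in>UNIV. (cmod (w$r))^2) = 0" by (simp only: cip_self)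
  then have "(\<Sum>r\<in>UNIV. (cmod (w$r))^2) = 0" by (simp only: of_real_eq_0_iff)
  then have "\<forall>r\<in>UNIV. (cmod (w$r))^2 = 0" by (subst (asm) sum_nonneg_eq_0_iff) auto
  then show "w = 0" by (simp add: vec_eq_iff)
qed

lemma Umat_sum: "(\<Sum>j\<in>UNIV. Umat j j) = (mat 1 :: complex^'a::finite^'a)"
proof -
  have "(\<Sum>j\<in>UNIV. (if p = j \<and> q = j then 1 else 0)) = (if p = q then 1 else (0::complex))" for p q :: 'a
  proof -
    have "(\<Sum>j\<in>UNIV. (if p = j \<and> q = j then 1 else 0)) = (\<Sum>j\<in>UNIV. if j = p then (if q = p then 1 else 0) else (0::complex))"
      by (rule sum.cong) auto
    then show ?thesis by (simp add: sum.delta)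
  qed
  then show ?thesis by (simp add: vec_eq_iff Umat_def mat_def sum_component)
qed

lemma mult_Umat: "(x::complex^'a::finite^'a) ** Umat i j = (\<Sum>l\<in>UNIV. cscale (x$l$i) (Umat l j))"
proof -
  have "(\<Sum>k\<in>UNIV. x$p$k * (if k = i \<and> q = j then 1 else 0)) = (\<Sum>l\<in>UNIV. x$l$i * (if p = l \<and> q = j then 1 else 0))"
    for p q
  proof -
    have "(\<Sum>k\<in>UNIV. x$p$k * (if k = i \<and> q = j then 1 else 0)) = (\<Sum>k\<in>UNIV. if k = i then (if q = j then x$p$i else 0) else 0)"
      by (rule sum.cong) auto
    moreover have "(\<Sum>l\<in>UNIV. x$l$i * (if p = l \<and> q = j then 1 else 0)) = (\<Sum>l\<in>UNIV. if l = p then (if q = j then x$p$i else 0) else 0)"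
      by (rule sum.cong) auto
    ultimately show ?thesis by (simp add: sum.delta)
  qed
  then show ?thesis by (simp add: vec_eq_iff Umat_def matrix_matrix_mult_def cscale_def sum_component)
qed

lemma sum_mult_vec: "(sum f I) *v (v::'a::comm_semiring_1^'n) = (\<Sum>k\<in>I. f k *v v)"
  apply (cases "finite I")
   apply (simp add: matrix_vector_mult_def vec_eq_iff sum_distrib_right)
   apply (intro allI) apply (rule sum.swap)
  apply (simp add: matrix_vector_mult_def vec_eq_iff)
  done



lemma key:
  fixes M1 :: "'h1::finite op set" and M2 :: "'h2::finite op set"
  assumes N1: "vN_algebra M1" and N2: "vN_algebra M2" and iso: "star_iso \<phi> M1 M2"
  shows "\<exists>cs ds. (\<forall>i. cs i \<in> {c. \<forall>x\<in>M1. c ** x = \<phi> x ** c}) \<and> (\<forall>i. ds i \<in> {d. \<forall>x\<in>M1. d ** \<phi> x = x ** d})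
     \<and> (\<Sum>i\<in>(UNIV::('h1 \<times> 'h2) set). cs i ** ds i) = mat 1"
proof -
  have C1: "csubspace M1" using N1 by (simp add: vN_algebra_def)
  have M1mul: "\<And>x y. x \<in> M1 \<Longrightarrow> y \<in> M1 \<Longrightarrow> x ** y \<in> M1"
    and M1adj: "\<And>x. x \<in> M1 \<Longrightarrow> adj x \<in> M1" and M1one: "mat 1 \<in> M1"
    using N1 by (auto simp: vN_algebra_def)
  define G where "G x = \<phi> (Eproj M1 x)" for x
  have Gin: "Eproj M1 x \<in> M1" for x using Eproj_in[OF C1] .
  have Gadd: "G (x + y) = G x + G y" for x y
    unfolding G_def using Eproj_add[OF C1] iso_add[OF iso Gin Gin] by simp
  have Gsc: "G (cscale c x) = cscale c (G x)" for c x
    unfolding G_def using Eproj_sc[OF C1] iso_sc[OF iso Gin] by simp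
  have G0: "G 0 = 0" using Gadd[of 0 0] by simp
  have Gsum: "G (sum f I) = (\<Sum>k\<in>I. G (f k))" for f and I :: "'a set"
    by (induction I rule: infinite_finite_induct) (auto simp: G0 Gadd)
  have Gmul: "x \<in> M1 \<Longrightarrow> G (x ** y) = \<phi> x ** G y" for x y
    unfolding G_def using Eproj_mult[OF N1] iso_mult[OF iso _ Gin] by simp
  have Gone: "G (mat 1) = mat 1"
    unfolding G_def using Eproj_id[OF C1 M1one] iso_one[OF N1 N2 iso] by simp
  define cm :: "'h1 \<times> 'h2 \<Rightarrow> complex^'h1^'h2" where "cm k = (\<chi> r i. G (Umat i (fst k)) $ r $ snd k)" for k
  define dm where "dm k = adjr (cm k)" for k
  have cm_int: "cm k ** x = \<phi> x ** cm k" if x: "x \<in> M1" for k x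
  proof -
    have "G (x ** Umat i (fst k)) = (\<Sum>l\<in>UNIV. cscale (x$l$i) (G (Umat l (fst k))))" for i
      by (simp add: mult_Umat Gsum Gsc)
    then have "(\<phi> x ** G (Umat i (fst k))) $ r $ snd k = (\<Sum>l\<in>UNIV. x$l$i * G (Umat l (fst k)) $ r $ snd k)" for i r
      using Gmul[OF x] by (simp add: cscale_def sum_component)
    then show ?thesis
      by (simp add: cm_def vec_eq_iff matrix_matrix_mult_def ac_simps)
  qed
  have dm_int: "dm k ** \<phi> x = x ** dm k" if x: "x \<in> M1" for k x
  proof -
    have ax: "adj x \<in> M1" using M1adj[OF x] .
    have "cm k ** adjr x = adjr (\<phi> x) ** cm k"
      using cm_int[OF ax] iso_adj[OF iso x] by (simp add: adj_adjr)
    then have "adjr (cm k ** adjr x) = adjr (adjr (\<phi> x) ** cm k)" by simp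
    then show ?thesis by (simp add: adjr_mult dm_def)
  qed
  define S where "S = (\<Sum>k\<in>UNIV. cm k ** dm k)"
  have S_inj: "v = 0" if Sv: "S *v v = 0" for v
  proof -
    have "cip (S *v v) v = (\<Sum>k\<in>UNIV. cip (dm k *v v) (dm k *v v))"
      by (simp add: S_def sum_mult_vec cip_sum matrix_vector_mul_assoc[symmetric] cip_adj dm_def)
    then have "(\<Sum>k\<in>UNIV. cip (dm k *v v) (dm k *v v)) = 0" using Sv by (simp add: cip_def)
    then have "(\<Sum>k\<in>UNIV. complex_of_real (\<Sum>r\<in>UNIV. (cmod ((dm k *v v)$r))^2)) = 0"
      by (simp only: cip_self)
    then have "complex_of_real (\<Sum>k\<in>UNIV. \<Sum>r\<in>UNIV. (cmod ((dm k *v v)$r))^2) = 0"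
      by (simp only: of_real_sum)
    then have "(\<Sum>k\<in>UNIV. \<Sum>r\<in>UNIV. (cmod ((dm k *v v)$r))^2) = 0"
      by (simp only: of_real_eq_0_iff)
    then have "\<forall>k\<in>UNIV. (\<Sum>r\<in>UNIV. (cmod ((dm k *v v)$r))^2) = 0"
      by (subst (asm) sum_nonneg_eq_0_iff) (auto intro: sum_nonneg)
    then have "\<forall>k. cip (dm k *v v) (dm k *v v) = 0" by (metis cip_self of_real_0 UNIV_I)
    then have w0: "\<And>k. dm k *v v = 0" using cip_self_eq0 by blast
    have "v $ m = 0" for m
    proof -
      have "(\<Sum>j\<in>UNIV. (dm (j, m) *v v) $ j) = (\<Sum>j\<in>UNIV. \<Sum>s\<in>UNIV. cnj (G (Umat j j) $ s $ m) * v $ s)"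
        by (simp add: dm_def adjr_def cm_def matrix_vector_mult_def)
      also have "\<dots> = (\<Sum>s\<in>UNIV. \<Sum>j\<in>UNIV. cnj (G (Umat j j) $ s $ m) * v $ s)" by (rule sum.swap)
      also have "\<dots> = (\<Sum>s\<in>UNIV. cnj (G (\<Sum>j\<in>UNIV. Umat j j) $ s $ m) * v $ s)"
        by (simp add: Gsum sum_component sum_distrib_right)
      also have "\<dots> = (\<Sum>s\<in>UNIV. cnj ((mat 1 :: complex^'h2^'h2) $ s $ m) * v $ s)"
        by (simp only: Umat_sum Gone)
      also have "\<dots> = (\<Sum>s\<in>UNIV. if s = m then v $ s else 0)"
        by (rule sum.cong) (auto simp: mat_def)
      also have "\<dots> = v $ m" by simp
      finally show ?thesis using w0 by simp
    qed
    then show ?thesis by (simp add: vec_eq_iff)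
  qed
  obtain T where TS: "T ** S = mat 1"
    using matrix_left_invertible_ker[of S] S_inj by blast
  have ST: "S ** T = mat 1" using TS matrix_left_right_inverse by blast
  have S_com: "S ** \<phi> x = \<phi> x ** S" if x: "x \<in> M1" for x
  proof -
    have "cm k ** dm k ** \<phi> x = \<phi> x ** (cm k ** dm k)" for k
      by (metis matrix_mul_assoc dm_int[OF x] cm_int[OF x])
    then show ?thesis by (simp add: S_def mult_sum_left mult_sum_right)
  qed
  have T_com: "T ** \<phi> x = \<phi> x ** T" if x: "x \<in> M1" for x
  proof -
    have "T ** \<phi> x = T ** \<phi> x ** (S ** T)" by (simp add: ST)
    also have "\<dots> = T ** (S ** \<phi> x) ** T" by (simp add: S_com[OF x] matrix_mul_assoc)
    also have "\<dots> = \<phi> x ** T" by (simp add: matrix_mul_assoc TS)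
    finally show ?thesis .
  qed
  show ?thesis
  proof (intro exI conjI allI)
    fix i
    show "T ** cm i \<in> {c. \<forall>x\<in>M1. c ** x = \<phi> x ** c}"
      using cm_int T_com by (simp add: matrix_mul_assoc[symmetric]) (simp add: matrix_mul_assoc)
    show "dm i \<in> {d. \<forall>x\<in>M1. d ** \<phi> x = x ** d}" using dm_int by simp
  next
    show "(\<Sum>i\<in>UNIV. T ** cm i ** dm i) = mat 1"
      using TS by (simp add: S_def mult_sum_right matrix_mul_assoc)
  qed
qed



theorem theorem4p3:
  fixes M1 :: "'h1::finite op set" and N1 :: "'k1::finite op set"
    and M2 :: "'h2::finite op set" and N2 :: "'k2::finite op set"
  assumes "vN_algebra M1" and "vN_algebra N1" and "vN_algebra M2" and "vN_algebra N2"
    and "vN_isomorphic M1 M2" and "vN_isomorphic N1 N2"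
  shows "\<exists>f. bij_betw f {V. quantum_multi_relation M1 N1 V} {V. quantum_multi_relation M2 N2 V}"
proof -
  note vM1 = assms(1) and vN1 = assms(2) and vM2 = assms(3) and vN2 = assms(4)
  obtain \<phi> where \<phi>: "star_iso \<phi> M1 M2" using assms(5) by (auto simp: vN_isomorphic_def)
  obtain \<psi> where \<psi>: "star_iso \<psi> N1 N2" using assms(6) by (auto simp: vN_isomorphic_def)
  let ?g = "inv_into M1 \<phi>"
  have \<phi>': "star_iso ?g M2 M1" by (rule iso_inv[OF vM1 vM2 \<phi>])
  have bij: "bij_betw \<phi> M1 M2" using \<phi> by (simp add: star_iso_def)
  have gf: "x \<in> M1 \<Longrightarrow> ?g (\<phi> x) = x" for x using bij by (simp add: bij_betw_inv_into_left)
  have fin: "x \<in> M1 \<Longrightarrow> \<phi> x \<in> M2" for x using iso_in[OF \<phi>] .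
  have img: "\<phi> ` M1 = M2" using iso_img[OF \<phi>] .
  define A :: "(complex^'h1^'h2) set" where "A = {c. \<forall>x\<in>M1. c ** x = \<phi> x ** c}"
  define B :: "(complex^'h2^'h1) set" where "B = {d. \<forall>x\<in>M1. d ** \<phi> x = x ** d}"
  obtain cs' ds' where cs': "\<And>i. cs' i \<in> A" and ds': "\<And>i. ds' i \<in> B"
    and U2: "(\<Sum>i\<in>(UNIV::('h1 \<times> 'h2) set). cs' i ** ds' i) = mat 1"
    using key[OF vM1 vM2 \<phi>] unfolding A_def B_def by blast
  obtain cs2 ds2 where cs2: "\<And>i. cs2 i \<in> {c. \<forall>y\<in>M2. c ** y = ?g y ** c}"
    and ds2: "\<And>i. ds2 i \<in> {d. \<forall>y\<in>M2. d ** ?g y = y ** d}"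
    and U1: "(\<Sum>i\<in>(UNIV::('h2 \<times> 'h1) set). cs2 i ** ds2 i) = mat 1"
    using key[OF vM2 vM1 \<phi>'] by blast
  have cs2B: "cs2 i \<in> B" for i
  proof -
    have "cs2 i ** \<phi> x = x ** cs2 i" if x: "x \<in> M1" for x
      using cs2[of i] fin[OF x] gf[OF x] by simp
    then show ?thesis unfolding B_def by simp
  qed
  have ds2A: "ds2 i \<in> A" for i
  proof -
    have "ds2 i ** x = \<phi> x ** ds2 i" if x: "x \<in> M1" for x
      using ds2[of i] fin[OF x] gf[OF x] by force
    then show ?thesis unfolding A_def by simp
  qed
  have A1: "a ** c \<in> A" if a: "a \<in> commutant M2" and c: "c \<in> A" for a c
  proof -
    have "(a ** c) ** x = \<phi> x ** (a ** c)" if x: "x \<in> M1" for x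
    proof -
      have 1: "c ** x = \<phi> x ** c" using c x by (simp add: A_def)
      have 2: "a ** \<phi> x = \<phi> x ** a" using a fin[OF x] by (simp add: commutant_def)
      show ?thesis by (simp add: matrix_mul_assoc[symmetric] 1) (simp add: matrix_mul_assoc 2)
    qed
    then show ?thesis by (simp add: A_def)
  qed
  have A2: "c ** b \<in> A" if c: "c \<in> A" and b: "b \<in> commutant M1" for c b
  proof -
    have "(c ** b) ** x = \<phi> x ** (c ** b)" if x: "x \<in> M1" for x
    proof -
      have 1: "c ** x = \<phi> x ** c" using c x by (simp add: A_def)
      have 2: "b ** x = x ** b" using b x by (simp add: commutant_def)
      show ?thesis by (simp add: matrix_mul_assoc[symmetric] 2) (simp add: matrix_mul_assoc 1)
    qed
    then show ?thesis by (simp add: A_def)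
  qed
  have B1: "b ** d \<in> B" if b: "b \<in> commutant M1" and d: "d \<in> B" for b d
  proof -
    have "(b ** d) ** \<phi> x = x ** (b ** d)" if x: "x \<in> M1" for x
    proof -
      have 1: "d ** \<phi> x = x ** d" using d x by (simp add: B_def)
      have 2: "b ** x = x ** b" using b x by (simp add: commutant_def)
      show ?thesis by (simp add: matrix_mul_assoc[symmetric] 1) (simp add: matrix_mul_assoc 2)
    qed
    then show ?thesis by (simp add: B_def)
  qed
  have B2: "d ** a \<in> B" if d: "d \<in> B" and a: "a \<in> commutant M2" for d a
  proof -
    have "(d ** a) ** \<phi> x = x ** (d ** a)" if x: "x \<in> M1" for x
    proof -
      have 1: "d ** \<phi> x = x ** d" using d x by (simp add: B_def)
      have 2: "a ** \<phi> x = \<phi> x ** a" using a fin[OF x] by (simp add: commutant_def)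
      show ?thesis by (simp add: matrix_mul_assoc[symmetric] 2) (simp add: matrix_mul_assoc 1)
    qed
    then show ?thesis by (simp add: B_def)
  qed
  have DC: "d ** c \<in> commutant M1" if d: "d \<in> B" and c: "c \<in> A" for d c
  proof -
    have "(d ** c) ** x = x ** (d ** c)" if x: "x \<in> M1" for x
    proof -
      have 1: "c ** x = \<phi> x ** c" using c x by (simp add: A_def)
      have 2: "d ** \<phi> x = x ** d" using d x by (simp add: B_def)
      show ?thesis by (simp add: matrix_mul_assoc[symmetric] 1) (simp add: matrix_mul_assoc 2)
    qed
    then show ?thesis by (simp add: commutant_def)
  qed
  have CD: "c ** d \<in> commutant M2" if c: "c \<in> A" and d: "d \<in> B" for c d
  proof -
    have "(c ** d) ** y = y ** (c ** d)" if y: "y \<in> M2" for y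
    proof -
      obtain x where x: "x \<in> M1" "y = \<phi> x" using y img by blast
      have 1: "c ** x = \<phi> x ** c" using c x by (simp add: A_def)
      have 2: "d ** \<phi> x = x ** d" using d x by (simp add: B_def)
      show ?thesis unfolding x(2) by (simp add: matrix_mul_assoc[symmetric] 2) (simp add: matrix_mul_assoc 1)
    qed
    then show ?thesis by (simp add: commutant_def)
  qed
  have C1: "csubspace N1" using vN1 by (simp add: vN_algebra_def)
  have b1: "bij_betw (TR A B :: ('h1 \<times> 'k1) op set \<Rightarrow> _) {V. quantum_multi_relation M1 N1 V} {V. quantum_multi_relation M2 N1 V}"
    apply (rule TR_bij[where A=A and B=B])
    apply (rule C1)
    apply (erule (1) A1)
    apply (erule (1) A2)
    apply (erule (1) B1)
    apply (erule (1) B2)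
    apply (erule (1) DC)
    apply (erule (1) CD)
    apply (rule cs2B)
    apply (rule ds2A)
    apply (rule U1)
    apply (rule ds')
    apply (rule cs')
    apply (rule U2)
    done
  have b2: "bij_betw (image (bmap \<psi> :: ('h2\<times>'k1) op \<Rightarrow> _)) {V. quantum_multi_relation M2 N1 V} {V. quantum_multi_relation M2 N2 V}"
    by (rule bmap_bij[OF vN1 vN2 \<psi>])
  show ?thesis using bij_betw_trans[OF b1 b2] by blast
qed


end
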